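(* Let $(\alpha_n)_{n\ge0}$ be complex numbers with $|\alpha_n|<1$ and notation as in the context. For every integer $m$ and nonnegative integer $n$, \[ \det\left(\mu_{m+i-j}\right)_{0\le i,j\le n}=\prod_{k=0}^{n-1}(1-|\alpha_k|^2)^{n-k}\cdot\det\left(\mu_{m+i,j}\right)_{0\le i,j\le n}, \] where $\mu_{a,j}=\langle\Phi_j(z),z^a\rangle/\langle\Phi_j(z),\Phi_j(z)\rangle$ for integers $a$ and $j\ge0$, and the product is $1$ when $n=0$.
   Context: For a polynomial $f(z)=\sum_{k=0}^n a_kz^k$ of degree $n$, write $\overline{f}(z)=\sum_k\overline{a_k}z^k$ and $f^*(z)=z^n\overline{f}(1/z)$. Define monic $\Phi_n$ by $\Phi_0=1$, $\Phi_{n+1}(z)=z\Phi_n(z)-\overline{\alpha_n}\Phi_n^*(z)$. Let $\mathcal{L}$ be the unique linear functional on the space of Laurent polynomials with $\mathcal{L}(1)=1$ and $\mathcal{L}(\Phi_m(z)\overline{\Phi_n}(1/z))=0$ for $m\ne n$ (for a Laurent polynomial $g$, $\overline{g}$ conjugates all coefficients). Set $\langle f,g\rangle=\mathcal{L}(f(z)\overline{g}(1/z))$ and $\mu_k=\mathcal{L}(z^{-k})$ for integers $k$. *)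

theory Defs
  imports "HOL-Computational_Algebra.Polynomial" "Jordan_Normal_Form.Determinant"
begin

text \<open>Laurent polynomials are represented by their coefficient functions
  \<open>int \<Rightarrow> complex\<close> with finite support.\<close>

definition laurent :: "(int \<Rightarrow> complex) \<Rightarrow> bool" where
  "laurent g \<longleftrightarrow> finite {k. g k \<noteq> 0}"

definition lin_functional :: "((int \<Rightarrow> complex) \<Rightarrow> complex) \<Rightarrow> bool" where
  "lin_functional L \<longleftrightarrow>
     (\<forall>a f g. laurent f \<longrightarrow> laurent g \<longrightarrow>
        L (\<lambda>k. a * f k + g k) = a * L f + L g)"

definition zpow :: "int \<Rightarrow> int \<Rightarrow> complex" where
  "zpow a = (\<lambda>k. if k = a then 1 else 0)"

definition lp_of_poly :: "complex poly \<Rightarrow> int \<Rightarrow> complex" where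
  "lp_of_poly p = (\<lambda>k. if k \<ge> 0 then coeff p (nat k) else 0)"

text \<open>The Laurent polynomial \<open>f(z) \<cdot> conj-coeff(g)(1/z)\<close>.\<close>
definition lpair :: "(int \<Rightarrow> complex) \<Rightarrow> (int \<Rightarrow> complex) \<Rightarrow> int \<Rightarrow> complex" where
  "lpair f g = (\<lambda>k. \<Sum>i\<in>{i. f i \<noteq> 0}. \<Sum>j\<in>{j. g j \<noteq> 0}.
                     if i - j = k then f i * cnj (g j) else 0)"

definition lip :: "((int \<Rightarrow> complex) \<Rightarrow> complex) \<Rightarrow> (int \<Rightarrow> complex) \<Rightarrow> (int \<Rightarrow> complex) \<Rightarrow> complex" where
  "lip L f g = L (lpair f g)"

text \<open>\<open>f^*(z) = z^n \<bar>f(1/z)\<close> with \<open>n = deg f\<close>.\<close>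
definition pstar :: "complex poly \<Rightarrow> complex poly" where
  "pstar p = map_poly cnj (reflect_poly p)"

fun Phi :: "(nat \<Rightarrow> complex) \<Rightarrow> nat \<Rightarrow> complex poly" where
  "Phi \<alpha> 0 = 1"
| "Phi \<alpha> (Suc n) = [:0, 1:] * Phi \<alpha> n - smult (cnj (\<alpha> n)) (pstar (Phi \<alpha> n))"

definition mom :: "((int \<Rightarrow> complex) \<Rightarrow> complex) \<Rightarrow> int \<Rightarrow> complex" where
  "mom L k = L (zpow (- k))"

definition mom2 :: "((int \<Rightarrow> complex) \<Rightarrow> complex) \<Rightarrow> (nat \<Rightarrow> complex) \<Rightarrow> int \<Rightarrow> nat \<Rightarrow> complex" where
  "mom2 L \<alpha> a j = lip L (lp_of_poly (Phi \<alpha> j)) (zpow a) /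
                   lip L (lp_of_poly (Phi \<alpha> j)) (lp_of_poly (Phi \<alpha> j))"

definition is_OPUC_functional :: "(nat \<Rightarrow> complex) \<Rightarrow> ((int \<Rightarrow> complex) \<Rightarrow> complex) \<Rightarrow> bool" where
  "is_OPUC_functional \<alpha> L \<longleftrightarrow> lin_functional L \<and> L (zpow 0) = 1 \<and>
     (\<forall>m n. m \<noteq> n \<longrightarrow> L (lpair (lp_of_poly (Phi \<alpha> m)) (lp_of_poly (Phi \<alpha> n))) = 0)"

end

theory Submission
  imports Defs
begin


lemma L0: assumes "lin_functional L" shows "L (\<lambda>k. 0) = 0"
proof -
  have "laurent (\<lambda>k. 0)" by (simp add: laurent_def)
  then have "L (\<lambda>k. 1 * 0 + 0) = 1 * L (\<lambda>k. 0) + L (\<lambda>k. 0)"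
    using assms unfolding lin_functional_def by blast
  then show ?thesis by simp
qed

lemma laurent_sum:
  assumes "finite A" "\<forall>x\<in>A. laurent (h x)"
  shows "laurent (\<lambda>k. \<Sum>x\<in>A. c x * h x k)"
proof -
  have "{k. (\<Sum>x\<in>A. c x * h x k) \<noteq> 0} \<subseteq> (\<Union>x\<in>A. {k. h x k \<noteq> 0})"
  proof
    fix k assume "k \<in> {k. (\<Sum>x\<in>A. c x * h x k) \<noteq> 0}"
    then have "(\<Sum>x\<in>A. c x * h x k) \<noteq> 0" by simp
    then obtain x where "x \<in> A" "c x * h x k \<noteq> 0" by (meson sum.neutral)
    then show "k \<in> (\<Union>x\<in>A. {k. h x k \<noteq> 0})" by auto
  qed
  moreover have "finite (\<Union>x\<in>A. {k. h x k \<noteq> 0})"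
    using assms by (auto simp: laurent_def)
  ultimately show ?thesis unfolding laurent_def by (rule finite_subset)
qed

lemma Lsum:
  assumes L: "lin_functional L" and "finite A" "\<forall>x\<in>A. laurent (h x)"
  shows "L (\<lambda>k. \<Sum>x\<in>A. c x * h x k) = (\<Sum>x\<in>A. c x * L (h x))"
  using assms(2,3)
proof (induction A rule: finite_induct)
  case empty
  then show ?case using L0[OF L] by simp
next
  case (insert x F)
  have e: "(\<lambda>k. \<Sum>y\<in>insert x F. c y * h y k) = (\<lambda>k. c x * h x k + (\<Sum>y\<in>F. c y * h y k))"
    using insert by simp
  have "laurent (h x)" using insert by simp
  moreover have "laurent (\<lambda>k. \<Sum>y\<in>F. c y * h y k)" using insert laurent_sum[of F h c] by simp
  ultimately have "L (\<lambda>k. c x * h x k + (\<Sum>y\<in>F. c y * h y k)) = c x * L (h x) + L (\<lambda>k. \<Sum>y\<in>F. c y * h y k)"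
    using L unfolding lin_functional_def by blast
  then show ?case using insert e by simp
qed

lemma laurent_zpow: "laurent (zpow a)"
  unfolding laurent_def zpow_def by simp

lemma conn:
  assumes L: "lin_functional L" and S: "finite S" "{i. f i \<noteq> 0} \<subseteq> S"
    and T: "finite T" "{j. g j \<noteq> 0} \<subseteq> T"
  shows "L (lpair f g) = (\<Sum>i\<in>S. \<Sum>j\<in>T. f i * cnj (g j) * mom L (j - i))"
proof -
  have fs: "finite {i. f i \<noteq> 0}" "finite {j. g j \<noteq> 0}" using S T finite_subset by auto
  have "lpair f g = (\<lambda>k. \<Sum>i\<in>S. \<Sum>j\<in>T. if i - j = k then f i * cnj (g j) else 0)"
  proof
    fix k
    have "lpair f g k = (\<Sum>i\<in>S. \<Sum>j\<in>{j. g j \<noteq> 0}. if i - j = k then f i * cnj (g j) else 0)"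
      unfolding lpair_def by (rule sum.mono_neutral_left) (use S fs in \<open>auto intro!: sum.neutral split: if_splits\<close>)
    also have "\<dots> = (\<Sum>i\<in>S. \<Sum>j\<in>T. if i - j = k then f i * cnj (g j) else 0)"
      by (rule sum.cong[OF refl], rule sum.mono_neutral_left) (use T fs in auto)
    finally show "lpair f g k = \<dots>" .
  qed
  also have "\<dots> = (\<lambda>k. \<Sum>p\<in>S \<times> T. (\<lambda>(i,j). f i * cnj (g j)) p * (\<lambda>(i,j). zpow (i - j)) p k)"
    by (auto simp: sum.cartesian_product zpow_def intro!: sum.cong)
  finally have "L (lpair f g) = (\<Sum>p\<in>S \<times> T. (\<lambda>(i,j). f i * cnj (g j)) p * L ((\<lambda>(i,j). zpow (i - j)) p))"
    using Lsum[OF L, of "S \<times> T"] S T by (simp add: laurent_zpow split_def)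
  also have "\<dots> = (\<Sum>i\<in>S. \<Sum>j\<in>T. f i * cnj (g j) * mom L (j - i))"
    by (simp add: sum.cartesian_product mom_def split_def)
  finally show ?thesis .
qed



definition ipN :: "(int \<Rightarrow> complex) \<Rightarrow> nat \<Rightarrow> complex poly \<Rightarrow> complex poly \<Rightarrow> complex" where
  "ipN \<mu> N p q = (\<Sum>i<N. \<Sum>j<N. coeff p i * cnj (coeff q j) * \<mu> (int j - int i))"

abbreviation ip where "ip L p q \<equiv> lip L (lp_of_poly p) (lp_of_poly q)"

lemma supp_lp: assumes "degree p < N" shows "{k. lp_of_poly p k \<noteq> 0} \<subseteq> int ` {..<N}"
proof
  fix k assume "k \<in> {k. lp_of_poly p k \<noteq> 0}"
  then have "k \<ge> 0" "coeff p (nat k) \<noteq> 0" by (auto simp: lp_of_poly_def split: if_splits)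
  then have "nat k \<le> degree p" using le_degree by blast
  then show "k \<in> int ` {..<N}" using assms \<open>k \<ge> 0\<close>
    by (intro image_eqI[of _ _ "nat k"]) auto
qed

lemma ip_ipN:
  assumes L: "lin_functional L" and "degree p < N" "degree q < N"
  shows "ip L p q = ipN (mom L) N p q"
proof -
  have "ip L p q = (\<Sum>i\<in>int ` {..<N}. \<Sum>j\<in>int ` {..<N}. lp_of_poly p i * cnj (lp_of_poly q j) * mom L (j - i))"
    unfolding lip_def by (rule conn[OF L]) (use supp_lp assms in auto)
  also have "\<dots> = ipN (mom L) N p q"
    unfolding ipN_def by (simp add: sum.reindex lp_of_poly_def)
  finally show ?thesis .
qed

lemma ipN_add1: "ipN \<mu> N (p + q) r = ipN \<mu> N p r + ipN \<mu> N q r"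
  unfolding ipN_def by (simp add: distrib_right sum.distrib)
lemma ipN_diff1: "ipN \<mu> N (p - q) r = ipN \<mu> N p r - ipN \<mu> N q r"
  unfolding ipN_def by (simp add: left_diff_distrib sum_subtractf)
lemma ipN_smult1: "ipN \<mu> N (smult c p) r = c * ipN \<mu> N p r"
  unfolding ipN_def by (simp add: sum_distrib_left mult.assoc)
lemma ipN_add2: "ipN \<mu> N r (p + q) = ipN \<mu> N r p + ipN \<mu> N r q"
  unfolding ipN_def by (simp add: distrib_right distrib_left sum.distrib)
lemma ipN_diff2: "ipN \<mu> N r (p - q) = ipN \<mu> N r p - ipN \<mu> N r q"
  unfolding ipN_def by (simp add: left_diff_distrib right_diff_distrib sum_subtractf)
lemma ipN_smult2: "ipN \<mu> N r (smult c p) = cnj c * ipN \<mu> N r p"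
  unfolding ipN_def by (simp add: sum_distrib_left mult_ac)
lemma ipN_shift: "ipN \<mu> (Suc N) (pCons 0 p) (pCons 0 q) = ipN \<mu> N p q"
  unfolding ipN_def by (simp add: sum.lessThan_Suc_shift del: sum.lessThan_Suc)

definition R :: "nat \<Rightarrow> complex poly \<Rightarrow> complex poly" where
  "R d p = (\<Sum>i\<le>d. monom (cnj (coeff p (d - i))) i)"

lemma coeff_R: "coeff (R d p) k = (if k \<le> d then cnj (coeff p (d - k)) else 0)"
  unfolding R_def by (simp add: coeff_sum coeff_monom)

lemma degree_R: "degree (R d p) \<le> d"
  by (rule degree_le) (simp add: coeff_R)

lemma ipN_R: "ipN \<mu> (Suc d) (R d p) (R d q) = ipN \<mu> (Suc d) q p"
proof -
  define G where "G a b = cnj (coeff p a) * coeff q b * \<mu> (int a - int b)" for a b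
  have "ipN \<mu> (Suc d) (R d p) (R d q) = (\<Sum>i<Suc d. \<Sum>j<Suc d. G (Suc d - Suc i) (Suc d - Suc j))"
    unfolding ipN_def G_def
    by (intro sum.cong refl) (auto simp: coeff_R of_nat_diff)
  also have "\<dots> = (\<Sum>i<Suc d. \<Sum>j<Suc d. G (Suc d - Suc i) j)"
    by (simp only: sum.nat_diff_reindex)
  also have "\<dots> = (\<Sum>i<Suc d. \<Sum>j<Suc d. G i j)"
    by (rule sum.nat_diff_reindex)
  also have "\<dots> = (\<Sum>j<Suc d. \<Sum>i<Suc d. G i j)" by (rule sum.swap)
  also have "\<dots> = ipN \<mu> (Suc d) q p"
    unfolding ipN_def G_def by (simp add: mult_ac)
  finally show ?thesis .
qed



context fixes L assumes L: "lin_functional L" begin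

lemma ip_add1: "ip L (p + q) r = ip L p r + ip L q r"
proof -
  define N where "N = Suc (degree p + degree q + degree r)"
  have "degree (p + q) < N" using degree_add_le_max[of p q] unfolding N_def by linarith
  moreover have "degree p < N" "degree q < N" "degree r < N" unfolding N_def by auto
  ultimately show ?thesis using ip_ipN[OF L] ipN_add1 by metis
qed

lemma ip_diff1: "ip L (p - q) r = ip L p r - ip L q r"
proof -
  define N where "N = Suc (degree p + degree q + degree r)"
  have "degree (p - q) < N" using degree_diff_le_max[of p q] unfolding N_def by linarith
  moreover have "degree p < N" "degree q < N" "degree r < N" unfolding N_def by auto
  ultimately show ?thesis using ip_ipN[OF L] ipN_diff1 by metis
qed

lemma ip_smult1: "ip L (smult c p) r = c * ip L p r"
proof -
  define N where "N = Suc (degree p + degree r)"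
  have "degree (smult c p) < N" using degree_smult_le[of c p] unfolding N_def by linarith
  moreover have "degree p < N" "degree r < N" unfolding N_def by auto
  ultimately show ?thesis using ip_ipN[OF L] ipN_smult1 by metis
qed

lemma ip_add2: "ip L r (p + q) = ip L r p + ip L r q"
proof -
  define N where "N = Suc (degree p + degree q + degree r)"
  have "degree (p + q) < N" using degree_add_le_max[of p q] unfolding N_def by linarith
  moreover have "degree p < N" "degree q < N" "degree r < N" unfolding N_def by auto
  ultimately show ?thesis using ip_ipN[OF L] ipN_add2 by metis
qed

lemma ip_diff2: "ip L r (p - q) = ip L r p - ip L r q"
proof -
  define N where "N = Suc (degree p + degree q + degree r)"
  have "degree (p - q) < N" using degree_diff_le_max[of p q] unfolding N_def by linarith
  moreover have "degree p < N" "degree q < N" "degree r < N" unfolding N_def by auto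
  ultimately show ?thesis using ip_ipN[OF L] ipN_diff2 by metis
qed

lemma ip_smult2: "ip L r (smult c p) = cnj c * ip L r p"
proof -
  define N where "N = Suc (degree p + degree r)"
  have "degree (smult c p) < N" using degree_smult_le[of c p] unfolding N_def by linarith
  moreover have "degree p < N" "degree r < N" unfolding N_def by auto
  ultimately show ?thesis using ip_ipN[OF L] ipN_smult2 by metis
qed

lemma ip_zero2: "ip L r 0 = 0"
  using ip_smult2[of r 0 0] by simp

lemma ip_shift: "ip L (pCons 0 p) (pCons 0 q) = ip L p q"
proof -
  define N where "N = Suc (degree p + degree q)"
  have "degree (pCons 0 p) < Suc N" "degree (pCons 0 q) < Suc N"
    unfolding N_def by (auto simp: degree_pCons_eq_if)
  moreover have "degree p < N" "degree q < N" unfolding N_def by auto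
  ultimately show ?thesis using ip_ipN[OF L] ipN_shift by metis
qed

lemma ip_R: assumes "degree p \<le> d" "degree q \<le> d"
  shows "ip L (R d p) (R d q) = ip L q p"
proof -
  have "degree (R d p) < Suc d" "degree (R d q) < Suc d" using degree_R[of d] by (auto simp: less_Suc_eq_le)
  moreover have "degree p < Suc d" "degree q < Suc d" using assms by auto
  ultimately show ?thesis using ip_ipN[OF L] ipN_R by metis
qed

end

lemma coeff_pstar: "coeff (pstar p) k = (if k \<le> degree p then cnj (coeff p (degree p - k)) else 0)"
  unfolding pstar_def by (simp add: coeff_map_poly coeff_reflect_poly)

lemma Phi_Suc': "Phi \<alpha> (Suc n) = pCons 0 (Phi \<alpha> n) - smult (cnj (\<alpha> n)) (pstar (Phi \<alpha> n))"
  by simp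

lemma Phi_deg: "degree (Phi \<alpha> n) = n \<and> coeff (Phi \<alpha> n) n = 1"
proof (induction n)
  case 0
  then show ?case by simp
next
  case (Suc n)
  have c: "coeff (Phi \<alpha> (Suc n)) k = coeff (pCons 0 (Phi \<alpha> n)) k - cnj (\<alpha> n) * coeff (pstar (Phi \<alpha> n)) k" for k
    by (simp only: Phi_Suc' coeff_diff coeff_smult)
  have c1: "coeff (Phi \<alpha> (Suc n)) (Suc n) = 1"
    using Suc by (simp only: c coeff_pstar) simp
  have "coeff (Phi \<alpha> (Suc n)) k = 0" if "k > Suc n" for k
  proof -
    obtain k' where "k = Suc k'" "k' > n" using \<open>k > Suc n\<close> by (cases k) auto
    then show ?thesis using Suc by (simp only: c coeff_pstar) (simp add: coeff_eq_0)
  qed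
  then have "degree (Phi \<alpha> (Suc n)) \<le> Suc n" by (intro degree_le) auto
  moreover have "degree (Phi \<alpha> (Suc n)) \<ge> Suc n" using c1 by (intro le_degree) simp
  ultimately have "degree (Phi \<alpha> (Suc n)) = Suc n" by (rule antisym)
  then show ?case using c1 by blast
qed

lemma Phi_degree[simp]: "degree (Phi \<alpha> n) = n" using Phi_deg by blast
lemma Phi_lead[simp]: "coeff (Phi \<alpha> n) n = 1" using Phi_deg by blast

lemma pstar_R: "pstar (Phi \<alpha> n) = R n (Phi \<alpha> n)"
  by (rule poly_eqI) (simp add: coeff_pstar coeff_R)

lemma pstar_R2: "pstar (Phi \<alpha> n) = R (Suc n) (pCons 0 (Phi \<alpha> n))"
proof (rule poly_eqI)
  fix k
  show "coeff (pstar (Phi \<alpha> n)) k = coeff (R (Suc n) (pCons 0 (Phi \<alpha> n))) k"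
    by (cases "k \<le> n") (auto simp: coeff_pstar coeff_R coeff_pCons Suc_diff_le split: nat.splits)
qed

lemma R_monom: "R n (monom 1 n) = 1"
  by (rule poly_eqI) (auto simp: coeff_R coeff_monom coeff_1)

lemma R_one: "R n 1 = monom 1 n"
  by (rule poly_eqI) (auto simp: coeff_R coeff_monom coeff_1)



lemma span_ind:
  assumes "\<forall>d<m. P (Phi \<alpha> d)" "P 0" "\<forall>p q c. P p \<longrightarrow> P q \<longrightarrow> P (smult c p + q)"
  shows "(\<forall>k\<ge>m. coeff p k = 0) \<Longrightarrow> P p"
proof -
  have "\<forall>p. (\<forall>k\<ge>d. coeff p k = 0) \<longrightarrow> P p" if "d \<le> m" for d
    using that
  proof (induction d)
    case 0
    show ?case
    proof (intro allI impI)
      fix p :: "complex poly" assume "\<forall>k\<ge>0. coeff p k = 0"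
      then have "p = 0" by (intro poly_eqI) simp
      then show "P p" using assms by simp
    qed
  next
    case (Suc d)
    show ?case
    proof (intro allI impI)
      fix p :: "complex poly" assume h: "\<forall>k\<ge>Suc d. coeff p k = 0"
      define q where "q = p - smult (coeff p d) (Phi \<alpha> d)"
      have "\<forall>k\<ge>d. coeff q k = 0"
      proof (intro allI impI)
        fix k assume "d \<le> k"
        show "coeff q k = 0"
        proof (cases "k = d")
          case True then show ?thesis unfolding q_def by simp
        next
          case False
          then have "k > d" using \<open>d \<le> k\<close> by simp
          then show ?thesis using h unfolding q_def by (simp add: coeff_eq_0)
        qed
      qed
      then have "P q" using Suc by simp
      moreover have "P (Phi \<alpha> d)" using assms Suc by simp
      ultimately have "P (smult (coeff p d) (Phi \<alpha> d) + q)" using assms by blast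
      then show "P p" unfolding q_def by simp
    qed
  qed
  then show "(\<forall>k\<ge>m. coeff p k = 0) \<Longrightarrow> P p" by blast
qed

context fixes L \<alpha> assumes O: "is_OPUC_functional \<alpha> L" begin

lemma Lin: "lin_functional L" using O unfolding is_OPUC_functional_def by blast

lemma orth: "m \<noteq> n \<Longrightarrow> ip L (Phi \<alpha> m) (Phi \<alpha> n) = 0"
  using O unfolding is_OPUC_functional_def lip_def by blast

lemma O1: "(\<forall>k\<ge>m. coeff p k = 0) \<Longrightarrow> ip L (Phi \<alpha> m) p = 0"
  by (rule span_ind[where P="\<lambda>p. ip L (Phi \<alpha> m) p = 0" and \<alpha>=\<alpha>])
     (auto simp: orth ip_add2[OF Lin] ip_smult2[OF Lin] ip_zero2[OF Lin])

lemma ip_zero1: "ip L 0 r = 0"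
  using ip_smult1[OF Lin, of 0 0 r] by simp

lemma O2: "(\<forall>k\<ge>m. coeff p k = 0) \<Longrightarrow> ip L p (Phi \<alpha> m) = 0"
  by (rule span_ind[where P="\<lambda>p. ip L p (Phi \<alpha> m) = 0" and \<alpha>=\<alpha>])
     (auto simp: orth ip_add1[OF Lin] ip_smult1[OF Lin] ip_zero1)

definition Kap where "Kap n = ip L (Phi \<alpha> n) (Phi \<alpha> n)"

lemma K1: "Kap n = ip L (Phi \<alpha> n) (monom 1 n)"
proof -
  have "ip L (Phi \<alpha> n) (Phi \<alpha> n - monom 1 n) = 0"
    by (rule O1) (auto simp: coeff_monom coeff_eq_0)
  then show ?thesis unfolding Kap_def by (simp add: ip_diff2[OF Lin])
qed

lemma K2: "Kap n = ip L (monom 1 n) (Phi \<alpha> n)"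
proof -
  have "ip L (Phi \<alpha> n - monom 1 n) (Phi \<alpha> n) = 0"
    by (rule O2) (auto simp: coeff_monom coeff_eq_0)
  then show ?thesis unfolding Kap_def by (simp add: ip_diff1[OF Lin])
qed

lemma K_Suc: "Kap (Suc n) = (1 - complex_of_real ((cmod (\<alpha> n))\<^sup>2)) * Kap n"
proof -
  let ?P = "Phi \<alpha> n" let ?S = "pstar (Phi \<alpha> n)" let ?a = "\<alpha> n"
  have Q: "Phi \<alpha> (Suc n) = pCons 0 ?P - smult (cnj ?a) ?S" by simp
  have m: "monom (1::complex) (Suc n) = pCons 0 (monom 1 n)"
    by (rule poly_eqI) (auto simp: coeff_monom coeff_pCons split: nat.splits)
  have e1: "ip L (pCons 0 ?P) (monom 1 (Suc n)) = Kap n"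
    unfolding m ip_shift[OF Lin] K1 ..
  have e2: "ip L ?S (monom 1 (Suc n)) = ip L 1 (pCons 0 ?P)"
  proof -
    have "ip L ?S (monom 1 (Suc n)) = ip L (R (Suc n) (pCons 0 ?P)) (R (Suc n) 1)"
      by (simp add: pstar_R2 R_one)
    also have "\<dots> = ip L 1 (pCons 0 ?P)"
      by (rule ip_R[OF Lin]) (auto simp: degree_pCons_eq_if)
    finally show ?thesis .
  qed
  have e3: "ip L 1 ?S = Kap n"
  proof -
    have "ip L 1 ?S = ip L (R n (monom 1 n)) (R n ?P)"
      by (simp add: pstar_R[symmetric] R_monom)
    also have "\<dots> = ip L ?P (monom 1 n)"
      by (rule ip_R[OF Lin]) (auto simp: degree_monom_eq)
    finally show ?thesis using K1 by simp
  qed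
  have "ip L 1 (Phi \<alpha> (Suc n)) = 0"
    by (rule O2) (auto simp: coeff_1)
  then have e4: "ip L 1 (pCons 0 ?P) = ?a * Kap n"
    unfolding Q ip_diff2[OF Lin] ip_smult2[OF Lin] e3 by simp
  have "Kap (Suc n) = ip L (Phi \<alpha> (Suc n)) (monom 1 (Suc n))" by (rule K1)
  also have "\<dots> = Kap n - cnj ?a * (?a * Kap n)"
    unfolding Q ip_diff1[OF Lin] ip_smult1[OF Lin] e1 e2 e4 ..
  also have "\<dots> = (1 - cnj ?a * ?a) * Kap n" by (simp add: algebra_simps)
  also have "cnj ?a * ?a = complex_of_real ((cmod ?a)\<^sup>2)"
    using complex_norm_square[of "\<alpha> n"] by (simp add: mult.commute)
  finally show ?thesis .
qed

lemma K0: "Kap 0 = 1"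
proof -
  have "Kap 0 = ipN (mom L) 1 1 1" unfolding Kap_def by (simp add: ip_ipN[OF Lin])
  also have "\<dots> = mom L 0" unfolding ipN_def by simp
  also have "\<dots> = 1" using O unfolding mom_def is_OPUC_functional_def by simp
  finally show ?thesis .
qed

lemma K_prod: "Kap n = (\<Prod>k<n. (1 - complex_of_real ((cmod (\<alpha> k))\<^sup>2)))"
  by (induction n) (simp_all add: K0 K_Suc mult.commute)

end


lemma prod_tri: "(\<Prod>l<Suc n. \<Prod>k<l. c k) = (\<Prod>k<n. (c k :: complex) ^ (n - k))"
proof (induction n)
  case 0 then show ?case by simp
next
  case (Suc n)
  have "(\<Prod>l<Suc (Suc n). \<Prod>k<l. c k) = (\<Prod>k<n. c k ^ (n - k)) * (\<Prod>k<Suc n. c k)"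
    using Suc by simp
  also have "\<dots> = (\<Prod>k<n. c k ^ (n - k) * c k) * c n" by (simp add: prod.distrib)
  also have "(\<Prod>k<n. c k ^ (n - k) * c k) = (\<Prod>k<n. c k ^ (Suc n - k))"
    by (intro prod.cong refl) (simp add: Suc_diff_le mult.commute)
  finally show ?case by simp
qed

lemma supp_zpow: "{k. zpow a k \<noteq> 0} \<subseteq> {a}" by (auto simp: zpow_def)

theorem proposition2p6:
  fixes \<alpha> :: "nat \<Rightarrow> complex" and L :: "(int \<Rightarrow> complex) \<Rightarrow> complex"
    and m :: int and n :: nat
  assumes "\<And>k. cmod (\<alpha> k) < 1"
    and "is_OPUC_functional \<alpha> L"
  shows "det (mat (Suc n) (Suc n) (\<lambda>(i, j). mom L (m + int i - int j))) =
         (\<Prod>k<n. (1 - complex_of_real ((cmod (\<alpha> k))\<^sup>2)) ^ (n - k)) *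
         det (mat (Suc n) (Suc n) (\<lambda>(i, j). mom2 L \<alpha> (m + int i) j))"
proof -
  note O = assms(2)
  note Ln = Lin[OF O]
  define s where "s = Suc n"
  define A where "A = mat s s (\<lambda>(i, j). mom L (m + int i - int j))"
  define B where "B = mat s s (\<lambda>(i, j). mom2 L \<alpha> (m + int i) j)"
  define PT where "PT = mat s s (\<lambda>(j, l). coeff (Phi \<alpha> l) j)"
  define M where "M = mat s s (\<lambda>(i, l). lip L (lp_of_poly (Phi \<alpha> l)) (zpow (m + int i)))"
  define D where "D = mat s s (\<lambda>(i, j). if i = j then Kap L \<alpha> j else 0)"
  have Kne: "Kap L \<alpha> l \<noteq> 0" for l
  proof -
    have "1 - complex_of_real ((cmod (\<alpha> k))\<^sup>2) \<noteq> 0" for k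
    proof
      assume "1 - complex_of_real ((cmod (\<alpha> k))\<^sup>2) = 0"
      then have "(cmod (\<alpha> k))\<^sup>2 = 1"
        by (metis eq_iff_diff_eq_0 of_real_eq_1_iff)
      moreover have "(cmod (\<alpha> k))\<^sup>2 < 1" using assms(1)[of k]
        by (simp add: power_less_one_iff abs_less_iff)
      ultimately show False by simp
    qed
    then show ?thesis unfolding K_prod[OF O] by (simp add: prod_zero_iff)
  qed
  have cA: "A \<in> carrier_mat s s" and cB: "B \<in> carrier_mat s s" and cPT: "PT \<in> carrier_mat s s"
    and cD: "D \<in> carrier_mat s s" and cM: "M \<in> carrier_mat s s"
    unfolding A_def B_def PT_def D_def M_def by auto
  have M1: "M = A * PT"
  proof (rule eq_matI)
    fix i l assume il: "i < dim_row (A * PT)" "l < dim_col (A * PT)"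
    then have i: "i < s" and l: "l < s" unfolding A_def PT_def by auto
    have "lip L (lp_of_poly (Phi \<alpha> l)) (zpow (m + int i)) =
       (\<Sum>j\<in>int ` {..<s}. \<Sum>a\<in>{m + int i}. lp_of_poly (Phi \<alpha> l) j * cnj (zpow (m + int i) a) * mom L (a - j))"
      unfolding lip_def
      by (rule conn[OF Ln]) (use supp_lp[of "Phi \<alpha> l" s] supp_zpow l in auto)
    also have "\<dots> = (\<Sum>j<s. coeff (Phi \<alpha> l) j * mom L (m + int i - int j))"
      by (simp add: sum.reindex lp_of_poly_def zpow_def)
    also have "\<dots> = (A * PT) $$ (i, l)"
      using i l unfolding A_def PT_def
      by (simp add: scalar_prod_def atLeast0LessThan mult.commute)
    finally show "M $$ (i, l) = (A * PT) $$ (i, l)" using i l unfolding M_def by simp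
  qed (use cA cPT cM in auto)
  have M2: "M = B * D"
  proof (rule eq_matI)
    fix i l assume il: "i < dim_row (B * D)" "l < dim_col (B * D)"
    then have i: "i < s" and l: "l < s" unfolding B_def D_def by auto
    have "(B * D) $$ (i, l) = (\<Sum>k\<in>{0..<s}. B $$ (i, k) * (if k = l then Kap L \<alpha> l else 0))"
      using i l unfolding B_def D_def by (simp add: scalar_prod_def cong: if_cong)
    also have "\<dots> = B $$ (i, l) * Kap L \<alpha> l"
      using l by (simp add: if_distrib cong: if_cong)
    also have "\<dots> = M $$ (i, l)"
      using i l Kne[of l, unfolded Kap_def[OF O]] unfolding B_def M_def mom2_def Kap_def[OF O] by simp
    finally show "M $$ (i, l) = (B * D) $$ (i, l)" by simp
  qed (use cB cD cM in auto)
  have dPT: "det PT = 1"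
  proof -
    have "upper_triangular PT" unfolding PT_def upper_triangular_def
      by (auto simp: coeff_eq_0)
    then have "det PT = prod_list (diag_mat PT)" using det_upper_triangular cPT by blast
    also have "diag_mat PT = map (\<lambda>i. 1) [0..<s]" unfolding diag_mat_def PT_def by simp
    finally show ?thesis by (simp add: prod.distinct_set_conv_list[symmetric])
  qed
  have dD: "det D = (\<Prod>l<s. Kap L \<alpha> l)"
  proof -
    have "upper_triangular D" unfolding D_def upper_triangular_def by auto
    then have "det D = prod_list (diag_mat D)" using det_upper_triangular cD by blast
    also have "diag_mat D = map (Kap L \<alpha>) [0..<s]" unfolding diag_mat_def D_def by simp
    finally show ?thesis
      by (simp add: prod.distinct_set_conv_list[symmetric] atLeast0LessThan)
  qed
  have "det A = det M" using det_mult[OF cA cPT] dPT M1 by simp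
  also have "\<dots> = det B * (\<Prod>l<s. Kap L \<alpha> l)" using det_mult[OF cB cD] dD M2 by simp
  also have "(\<Prod>l<s. Kap L \<alpha> l) = (\<Prod>k<n. (1 - complex_of_real ((cmod (\<alpha> k))\<^sup>2)) ^ (n - k))"
    unfolding s_def K_prod[OF O] by (rule prod_tri)
  finally show ?thesis unfolding A_def B_def s_def by simp
qed


end
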